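(* Let $\Gamma$ be an extensive-form game. If $\Gamma'\succeq\Gamma$ and $\Gamma'$ is a perfect-recall game, then $\Gamma'\succeq\mathrm{pr}(\Gamma)$. Moreover, $\mathrm{pr}(\Gamma)$ is a perfect-recall game.
   Context: An extensive-form game consists of a finite rooted tree (nodes $\mathcal H$, leaves $\mathcal Z$, actions at nonterminal nodes), a finite player set $\mathcal N$ plus chance, an assignment of nonterminal nodes to players or chance ($\mathcal H_i$ the nodes of $i$), chance distributions, utilities $u_i:\mathcal Z\to\mathbb R_{\ge0}$, and for each $i$ a partition $\mathcal I_i$ of $\mathcal H_i$ into infosets whose nodes share an action set. For a node $h$ with root-to-$h$ path $(h_0,\dots,h_{d-1})$ (excluding $h$), $\mathrm{obs}(h)=(i_k,I_k,a_k)_{k}$ lists the player at $h_k$, the infoset of $h_k$, and the action taken; $\mathrm{obs}_i(h)$ is the subsequence with $i_k=i$. Player $i$ has perfect recall if $\mathrm{obs}_i(h)=\mathrm{obs}_i(h')$ whenever $h,h'$ are in the same infoset of $i$; the game is a perfect-recall game if all players have perfect recall. For games with the same tree and utilities, $\Gamma'\succeq\Gamma$ means for every player $i$, every infoset of $i$ in $\Gamma$ is a disjoint union of infosets of $i$ in $\Gamma'$. $\mathrm{pr}(\Gamma)$ is the game with the same tree and utilities as $\Gamma$ in which, for every player $i$, each $I\in\mathcal I_i$ is partitioned into the classes of $h\sim h'\iff\mathrm{obs}_i(h)=\mathrm{obs}_i(h')$ (computed in $\Gamma$). *)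

theory Defs
  imports Complex_Main
begin

text \<open>The finite rooted tree is represented by its set of
nodes, each node being the list of actions on the path from the root (the root
is the empty list). The player assignment maps a nonterm_nodes node to
Some i (player i) or None (chance).\<close>

record ('p, 'a) game =
  nodes    :: "'a list set"
  players  :: "'p set"
  player   :: "'a list \<Rightarrow> 'p option"
  chance   :: "'a list \<Rightarrow> 'a \<Rightarrow> real"
  util     :: "'p \<Rightarrow> 'a list \<Rightarrow> real"
  infosets :: "'p \<Rightarrow> 'a list set set"

definition acts :: "('p, 'a) game \<Rightarrow> 'a list \<Rightarrow> 'a set" where
  "acts G h = {a. h @ [a] \<in> nodes G}"

definition leaves :: "('p, 'a) game \<Rightarrow> 'a list set" where
  "leaves G = {h \<in> nodes G. acts G h = {}}"

definition nonterm_nodes :: "('p, 'a) game \<Rightarrow> 'a list set" where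
  "nonterm_nodes G = nodes G - leaves G"

definition player_nodes :: "('p, 'a) game \<Rightarrow> 'p \<Rightarrow> 'a list set" where
  "player_nodes G i = {h \<in> nonterm_nodes G. player G h = Some i}"

definition chance_nodes :: "('p, 'a) game \<Rightarrow> 'a list set" where
  "chance_nodes G = {h \<in> nonterm_nodes G. player G h = None}"

definition is_game :: "('p, 'a) game \<Rightarrow> bool" where
  "is_game G \<longleftrightarrow>
     finite (nodes G) \<and> [] \<in> nodes G \<and>
     (\<forall>h a. h @ [a] \<in> nodes G \<longrightarrow> h \<in> nodes G) \<and>
     finite (players G) \<and>
     (\<forall>h \<in> nonterm_nodes G. player G h = None \<or> (\<exists>i \<in> players G. player G h = Some i)) \<and>
     (\<forall>h \<in> chance_nodes G.
        (\<forall>a \<in> acts G h. chance G h a \<ge> 0) \<and> (\<Sum>a \<in> acts G h. chance G h a) = 1) \<and>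
     (\<forall>i \<in> players G. \<forall>z \<in> leaves G. util G i z \<ge> 0) \<and>
     (\<forall>i \<in> players G.
        (\<forall>I \<in> infosets G i. I \<noteq> {}) \<and>
        \<Union>(infosets G i) = player_nodes G i \<and>
        (\<forall>I \<in> infosets G i. \<forall>J \<in> infosets G i. I \<noteq> J \<longrightarrow> I \<inter> J = {}) \<and>
        (\<forall>I \<in> infosets G i. \<forall>h \<in> I. \<forall>h' \<in> I. acts G h = acts G h'))"

definition infoset_of :: "('p, 'a) game \<Rightarrow> 'a list \<Rightarrow> 'a list set" where
  "infoset_of G h = (THE I. \<exists>i. player G h = Some i \<and> I \<in> infosets G i \<and> h \<in> I)"

text \<open>obs(h): for each strict ancestor h_k = take k h, the player at h_k,
its infoset and the action taken there.\<close>
definition obs :: "('p, 'a) game \<Rightarrow> 'a list \<Rightarrow> ('p option \<times> 'a list set \<times> 'a) list" where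
  "obs G h = map (\<lambda>k. (player G (take k h), infoset_of G (take k h), h ! k)) [0..<length h]"

definition obs_i :: "('p, 'a) game \<Rightarrow> 'p \<Rightarrow> 'a list \<Rightarrow> ('p option \<times> 'a list set \<times> 'a) list" where
  "obs_i G i h = filter (\<lambda>(j, _, _). j = Some i) (obs G h)"

definition perfect_recall :: "('p, 'a) game \<Rightarrow> bool" where
  "perfect_recall G \<longleftrightarrow>
     (\<forall>i \<in> players G. \<forall>I \<in> infosets G i. \<forall>h \<in> I. \<forall>h' \<in> I. obs_i G i h = obs_i G i h')"

definition same_base :: "('p, 'a) game \<Rightarrow> ('p, 'a) game \<Rightarrow> bool" where
  "same_base G' G \<longleftrightarrow>
     nodes G' = nodes G \<and> players G' = players G \<and>
     (\<forall>h \<in> nodes G. player G' h = player G h) \<and>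
     (\<forall>h \<in> chance_nodes G. \<forall>a \<in> acts G h. chance G' h a = chance G h a) \<and>
     (\<forall>i \<in> players G. \<forall>z \<in> leaves G. util G' i z = util G i z)"

definition refines :: "('p, 'a) game \<Rightarrow> ('p, 'a) game \<Rightarrow> bool" where
  "refines G' G \<longleftrightarrow> same_base G' G \<and>
     (\<forall>i \<in> players G. \<forall>I \<in> infosets G i. \<exists>S \<subseteq> infosets G' i.
        (\<forall>A \<in> S. \<forall>B \<in> S. A \<noteq> B \<longrightarrow> A \<inter> B = {}) \<and> I = \<Union>S)"

definition pr :: "('p, 'a) game \<Rightarrow> ('p, 'a) game" where
  "pr G = G\<lparr> infosets := (\<lambda>i. \<Union>I \<in> infosets G i.
              {{h' \<in> I. obs_i G i h' = obs_i G i h} | h. h \<in> I}) \<rparr>"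

end

theory Submission
  imports Defs
begin

lemma transfer:
  assumes N: "\<And>h a. h@[a] \<in> N \<Longrightarrow> h \<in> N"
  and Of0: "Of [] = []"
  and Ofs: "\<And>h a. h@[a] \<in> N \<Longrightarrow> Of (h@[a]) = Of h @ (if P h then [F h a] else [])"
  and Og0: "Og [] = []"
  and Ogs: "\<And>h a. h@[a] \<in> N \<Longrightarrow> Og (h@[a]) = Og h @ (if P h then [Gf h a] else [])"
  and step: "\<And>h a h' a'. h@[a] \<in> N \<Longrightarrow> h'@[a'] \<in> N \<Longrightarrow> P h \<Longrightarrow> P h' \<Longrightarrow>
      F h a = F h' a' \<Longrightarrow> Of h = Of h' \<Longrightarrow> Og h = Og h' \<Longrightarrow> Gf h a = Gf h' a'"
  shows "x \<in> N \<Longrightarrow> y \<in> N \<Longrightarrow> Of x = Of y \<Longrightarrow> Og x = Og y"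
proof (induction "length x + length y" arbitrary: x y rule: less_induct)
  case less
  show ?case
  proof (cases "\<exists>h a. x = h@[a] \<and> \<not> P h")
    case True
    then obtain h a where x: "x = h@[a]" "\<not> P h" by blast
    have "Of h = Of y" using less.prems Ofs[of h a] x by simp
    moreover have "h \<in> N" using N less.prems x by blast
    ultimately have "Og h = Og y" using less x by simp
    then show ?thesis using Ogs[of h a] x less.prems by simp
  next
    case nx: False
    show ?thesis
    proof (cases "\<exists>h a. y = h@[a] \<and> \<not> P h")
      case True
      then obtain h a where y: "y = h@[a]" "\<not> P h" by blast
      have "Of x = Of h" using less.prems Ofs[of h a] y by simp
      moreover have "h \<in> N" using N less.prems y by blast
      ultimately have "Og x = Og h" using less y by simp
      then show ?thesis using Ogs[of h a] y less.prems by simp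
    next
      case ny: False
      show ?thesis
      proof (cases "x = []")
        case True
        have "y = []"
        proof (rule ccontr)
          assume "y \<noteq> []"
          then obtain h a where y: "y = h@[a]" by (metis rev_exhaust)
          then have "P h" using ny by blast
          then show False using Ofs[of h a] y less.prems True Of0 by simp
        qed
        then show ?thesis using True by simp
      next
        case False
        then obtain h a where x: "x = h@[a]" by (metis rev_exhaust)
        then have Ph: "P h" using nx by blast
        have "y \<noteq> []"
        proof
          assume "y = []"
          then show False using Ofs[of h a] x Ph less.prems Of0 by simp
        qed
        then obtain h' a' where y: "y = h'@[a']" by (metis rev_exhaust)
        then have Ph': "P h'" using ny by blast
        have e: "Of h @ [F h a] = Of h' @ [F h' a']"
          using Ofs[of h a] Ofs[of h' a'] x y Ph Ph' less.prems by simp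
        then have e1: "Of h = Of h'" and e2: "F h a = F h' a'" by simp_all
        have "h \<in> N" "h' \<in> N" using N less.prems x y by blast+
        then have "Og h = Og h'" using less x y e1 by simp
        then have "Gf h a = Gf h' a'" using step[of h a h' a'] less.prems x y Ph Ph' e1 e2 by simp
        then show ?thesis using Ogs[of h a] Ogs[of h' a'] x y Ph Ph' less.prems \<open>Og h = Og h'\<close> by simp
      qed
    qed
  qed
qed

lemma g_prefix0: "is_game X \<Longrightarrow> (\<forall>h a. h @ [a] \<in> nodes X \<longrightarrow> h \<in> nodes X)"
  unfolding is_game_def by (elim conjE) assumption
lemma g_prefix: "is_game X \<Longrightarrow> h@[a] \<in> nodes X \<Longrightarrow> h \<in> nodes X"
  using g_prefix0 by blast
lemma g_player0: "is_game X \<Longrightarrow> (\<forall>h \<in> nonterm_nodes X. player X h = None \<or> (\<exists>i \<in> players X. player X h = Some i))"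
  unfolding is_game_def by (elim conjE) assumption
lemma g_player: "is_game X \<Longrightarrow> h \<in> nonterm_nodes X \<Longrightarrow> player X h = Some i \<Longrightarrow> i \<in> players X"
  using g_player0 by (metis option.distinct(1) option.inject)
lemma g_inf0: "is_game X \<Longrightarrow> i \<in> players X \<Longrightarrow> 
        (\<forall>I \<in> infosets X i. I \<noteq> {}) \<and>
        \<Union>(infosets X i) = player_nodes X i \<and>
        (\<forall>I \<in> infosets X i. \<forall>J \<in> infosets X i. I \<noteq> J \<longrightarrow> I \<inter> J = {}) \<and>
        (\<forall>I \<in> infosets X i. \<forall>h \<in> I. \<forall>h' \<in> I. acts X h = acts X h')"
  unfolding is_game_def by (elim conjE) (erule bspec)
lemma g_cover: "is_game X \<Longrightarrow> i \<in> players X \<Longrightarrow> \<Union>(infosets X i) = player_nodes X i"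
  by (rule g_inf0[THEN conjunct2, THEN conjunct1])
lemma g_disj: "is_game X \<Longrightarrow> i \<in> players X \<Longrightarrow> I \<in> infosets X i \<Longrightarrow> J \<in> infosets X i \<Longrightarrow> h \<in> I \<Longrightarrow> h \<in> J \<Longrightarrow> I = J"
proof -
  assume a: "is_game X" "i \<in> players X" "I \<in> infosets X i" "J \<in> infosets X i" "h \<in> I" "h \<in> J"
  have "\<forall>I \<in> infosets X i. \<forall>J \<in> infosets X i. I \<noteq> J \<longrightarrow> I \<inter> J = {}"
    by (rule g_inf0[OF a(1,2), THEN conjunct2, THEN conjunct2, THEN conjunct1])
  then have "I \<noteq> J \<longrightarrow> I \<inter> J = {}" using a(3,4) by simp
  then show "I = J" using a(5,6) by auto
qed

lemma obs_snoc: "obs X (h@[a]) = obs X h @ [(player X h, infoset_of X h, a)]"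
  unfolding obs_def by (auto simp: nth_append intro!: map_cong)

lemma obs_i_snoc: "obs_i X i (h@[a]) = obs_i X i h @
   (if player X h = Some i then [(Some i, infoset_of X h, a)] else [])"
  unfolding obs_i_def obs_snoc by auto

lemma obs_i_Nil: "obs_i X i [] = []"
  unfolding obs_i_def obs_def by simp

lemma infoset_of_eq:
  assumes "is_game X" "i \<in> players X" "I \<in> infosets X i" "h \<in> I"
  shows "infoset_of X h = I"
proof -
  have "h \<in> \<Union>(infosets X i)" using assms(3,4) by (rule UnionI)
  then have "h \<in> player_nodes X i" using g_cover[OF assms(1,2)] by simp
  then have p: "player X h = Some i" unfolding player_nodes_def by simp
  show ?thesis unfolding infoset_of_def
  proof (rule the_equality)
    show "\<exists>j. player X h = Some j \<and> I \<in> infosets X j \<and> h \<in> I" using p assms by blast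
  next
    fix J assume "\<exists>j. player X h = Some j \<and> J \<in> infosets X j \<and> h \<in> J"
    then have J: "J \<in> infosets X i" "h \<in> J" using p by auto
    show "J = I" by (rule g_disj[OF assms(1,2) J(1) assms(3) J(2) assms(4)])
  qed
qed

lemma infoset_of_in:
  assumes "is_game X" "player X h = Some i" "h \<in> nonterm_nodes X"
  shows "i \<in> players X \<and> infoset_of X h \<in> infosets X i \<and> h \<in> infoset_of X h"
proof -
  have i: "i \<in> players X" by (rule g_player[OF assms(1,3,2)])
  have "h \<in> player_nodes X i" using assms unfolding player_nodes_def by simp
  then have "h \<in> \<Union>(infosets X i)" using g_cover[OF assms(1) i] by simp
  then obtain I where "I \<in> infosets X i" "h \<in> I" by (rule UnionE)
  then show ?thesis using infoset_of_eq[OF assms(1) i] i by simp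
qed

lemma snoc_nonterm:
  assumes "is_game X" "h@[a] \<in> nodes X"
  shows "h \<in> nonterm_nodes X"
proof -
  have "h \<in> nodes X" by (rule g_prefix[OF assms])
  moreover have "a \<in> acts X h" using assms(2) unfolding acts_def by simp
  ultimately show ?thesis unfolding nonterm_nodes_def leaves_def by auto
qed

lemma pr_simps[simp]: "nodes (pr G) = nodes G" "players (pr G) = players G"
  "player (pr G) = player G" "chance (pr G) = chance G" "util (pr G) = util G"
  "infosets (pr G) i = (\<Union>I \<in> infosets G i. {{h' \<in> I. obs_i G i h' = obs_i G i h} | h. h \<in> I})"
  unfolding pr_def by simp_all

lemma pr_acts[simp]: "acts (pr G) = acts G"
  unfolding acts_def by simp

lemma pr_class:
  assumes "is_game G" "i \<in> players G" "J \<in> infosets (pr G) i" "h \<in> J"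
    "h \<in> I0" "I0 \<in> infosets G i" "h' \<in> I0" "obs_i G i h = obs_i G i h'"
  shows "h' \<in> J"
proof -
  obtain I h0 where I: "I \<in> infosets G i" "h0 \<in> I" "J = {y \<in> I. obs_i G i y = obs_i G i h0}"
    using assms(3) by auto
  have "h \<in> I" using I assms(4) by simp
  then have "I = I0" by (rule g_disj[OF assms(1,2) I(1) assms(6) _ assms(5)])
  then show ?thesis using I assms by auto
qed

lemma pr_infoset_of_eq:
  assumes "is_game G" "player G h = Some i" "h@[a] \<in> nodes G" "h'@[a'] \<in> nodes G"
    "player G h' = Some i" "infoset_of G h = infoset_of G h'" "obs_i G i h = obs_i G i h'"
  shows "infoset_of (pr G) h = infoset_of (pr G) h'"
proof -
  have n: "h \<in> nonterm_nodes G" "h' \<in> nonterm_nodes G"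
    by (rule snoc_nonterm[OF assms(1,3)], rule snoc_nonterm[OF assms(1,4)])
  note A = infoset_of_in[OF assms(1) assms(2) n(1)]
  note B = infoset_of_in[OF assms(1) assms(5) n(2)]
  have "\<And>J. (J \<in> infosets (pr G) i \<and> h \<in> J) = (J \<in> infosets (pr G) i \<and> h' \<in> J)"
  proof -
    fix J
    have i: "i \<in> players G" and I: "infoset_of G h \<in> infosets G i"
      and hI: "h \<in> infoset_of G h" and h'I: "h' \<in> infoset_of G h"
      using A B assms(6) by simp_all
    show "(J \<in> infosets (pr G) i \<and> h \<in> J) = (J \<in> infosets (pr G) i \<and> h' \<in> J)"
    proof
      assume J: "J \<in> infosets (pr G) i \<and> h \<in> J"
      then have "h' \<in> J" using pr_class[OF assms(1) i _ _ hI I h'I assms(7)] by simp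
      then show "J \<in> infosets (pr G) i \<and> h' \<in> J" using J by simp
    next
      assume J: "J \<in> infosets (pr G) i \<and> h' \<in> J"
      then have "h \<in> J" using pr_class[OF assms(1) i _ _ h'I I hI assms(7)[symmetric]] by simp
      then show "J \<in> infosets (pr G) i \<and> h \<in> J" using J by simp
    qed
  qed
  then show ?thesis unfolding infoset_of_def using assms(2,5) by simp
qed

lemma transfer1:
  assumes "is_game G" "x \<in> nodes G" "y \<in> nodes G" "obs_i G i x = obs_i G i y"
  shows "obs_i (pr G) i x = obs_i (pr G) i y"
  apply (rule transfer[where N="nodes G" and Of="obs_i G i" and Og="obs_i (pr G) i"
      and P="\<lambda>h. player G h = Some i" and F="\<lambda>h a. (Some i, infoset_of G h, a)"
      and Gf="\<lambda>h a. (Some i, infoset_of (pr G) h, a)"])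
  apply (erule g_prefix[OF assms(1)])
  apply (rule obs_i_Nil)
  apply (rule obs_i_snoc)
  apply (rule obs_i_Nil)
  apply (simp add: obs_i_snoc[of "pr G"])
  subgoal for h a h' a'
    using pr_infoset_of_eq[OF assms(1), of h i a h' a'] by simp
  using assms by simp_all

lemma pr_derived[simp]: "leaves (pr G) = leaves G" "nonterm_nodes (pr G) = nonterm_nodes G"
  "chance_nodes (pr G) = chance_nodes G" "player_nodes (pr G) = player_nodes G"
  unfolding leaves_def nonterm_nodes_def chance_nodes_def player_nodes_def by simp_all

lemma refinesD:
  assumes "refines G' G" "i \<in> players G" "I \<in> infosets G i"
  obtains S where "S \<subseteq> infosets G' i" "\<forall>A \<in> S. \<forall>B \<in> S. A \<noteq> B \<longrightarrow> A \<inter> B = {}" "I = \<Union>S"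
proof -
  have R: "\<forall>i \<in> players G. \<forall>I \<in> infosets G i. \<exists>S \<subseteq> infosets G' i.
        (\<forall>A \<in> S. \<forall>B \<in> S. A \<noteq> B \<longrightarrow> A \<inter> B = {}) \<and> I = \<Union>S"
    using assms(1) unfolding refines_def by (rule conjunct2)
  have "\<exists>S \<subseteq> infosets G' i. (\<forall>A \<in> S. \<forall>B \<in> S. A \<noteq> B \<longrightarrow> A \<inter> B = {}) \<and> I = \<Union>S"
    by (rule bspec[OF bspec[OF R assms(2)] assms(3)])
  then obtain S where "S \<subseteq> infosets G' i" "(\<forall>A \<in> S. \<forall>B \<in> S. A \<noteq> B \<longrightarrow> A \<inter> B = {})" "I = \<Union>S"
    by (elim exE conjE)
  then show ?thesis using that by simp
qed

lemma infoset_nodes: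
  assumes "is_game G" "i \<in> players G" "I \<in> infosets G i"
  shows "I \<subseteq> nodes G"
proof -
  have "I \<subseteq> \<Union>(infosets G i)" using assms(3) by (rule Union_upper)
  then have "I \<subseteq> player_nodes G i" using g_cover[OF assms(1,2)] by simp
  then show ?thesis unfolding player_nodes_def nonterm_nodes_def by blast
qed

lemma pr_infosetE:
  assumes "J \<in> infosets (pr G) i"
  obtains I h0 where "I \<in> infosets G i" "h0 \<in> I" "J = {y \<in> I. obs_i G i y = obs_i G i h0}"
proof -
  have "J \<in> (\<Union>I \<in> infosets G i. {{h' \<in> I. obs_i G i h' = obs_i G i h} | h. h \<in> I})"
    using assms by simp
  then obtain I where I: "I \<in> infosets G i" "J \<in> {{h' \<in> I. obs_i G i h' = obs_i G i h} | h. h \<in> I}"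
    by (rule UN_E)
  from I(2) obtain h0 where "h0 \<in> I" "J = {h' \<in> I. obs_i G i h' = obs_i G i h0}" by blast
  then show ?thesis using that I(1) by blast
qed

lemma same_nonterm: "nodes G' = nodes G \<Longrightarrow> nonterm_nodes G' = nonterm_nodes G"
  unfolding leaves_def nonterm_nodes_def acts_def by simp

lemma step2:
  assumes g: "is_game G" and g': "is_game G'" and r: "refines G' G"
    and a: "h@[a] \<in> nodes G" "h'@[a'] \<in> nodes G" "player G h = Some i" "player G h' = Some i"
    "infoset_of G' h = infoset_of G' h'"
  shows "infoset_of G h = infoset_of G h'"
proof -
  have sb: "same_base G' G" using r unfolding refines_def by simp
  have nd: "nodes G' = nodes G" using sb unfolding same_base_def by simp
  have hn: "h \<in> nodes G" "h' \<in> nodes G" using g_prefix[OF g a(1)] g_prefix[OF g a(2)] by simp_all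
  have pl: "player G' h = Some i" "player G' h' = Some i" using sb hn a(3,4) unfolding same_base_def by simp_all
  have nt: "h \<in> nonterm_nodes G" "h' \<in> nonterm_nodes G"
    by (rule snoc_nonterm[OF g a(1)], rule snoc_nonterm[OF g a(2)])
  then have nt': "h \<in> nonterm_nodes G'" "h' \<in> nonterm_nodes G'" using same_nonterm[OF nd] by simp_all
  note A = infoset_of_in[OF g' pl(1) nt'(1)]
  note A' = infoset_of_in[OF g' pl(2) nt'(2)]
  note B = infoset_of_in[OF g a(3) nt(1)]
  have i: "i \<in> players G" using B by simp
  have i': "i \<in> players G'" using A by simp
  have Bin: "infoset_of G h \<in> infosets G i" and hB: "h \<in> infoset_of G h" using B by simp_all
  have Ain: "infoset_of G' h \<in> infosets G' i" and hA: "h \<in> infoset_of G' h" using A by simp_all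
  obtain S where S: "S \<subseteq> infosets G' i" "\<forall>A \<in> S. \<forall>B \<in> S. A \<noteq> B \<longrightarrow> A \<inter> B = {}" "infoset_of G h = \<Union>S"
    by (rule refinesD[OF r i Bin])
  have "h \<in> \<Union>S" using hB S(3) by simp
  then obtain C where C: "C \<in> S" "h \<in> C" by (rule UnionE)
  have Cin: "C \<in> infosets G' i" by (rule subsetD[OF S(1) C(1)])
  have "C = infoset_of G' h" by (rule g_disj[OF g' i' Cin Ain C(2) hA])
  then have "h' \<in> C" using A' a(5) by simp
  then have "h' \<in> \<Union>S" using C(1) by (intro UnionI)
  then have h'B: "h' \<in> infoset_of G h" using S(3) by simp
  show ?thesis using infoset_of_eq[OF g i Bin h'B] by simp
qed

lemma transfer2:
  assumes g: "is_game G" and g': "is_game G'" and r: "refines G' G"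
    and "x \<in> nodes G" "y \<in> nodes G" "obs_i G' i x = obs_i G' i y"
  shows "obs_i G i x = obs_i G i y"
proof -
  have sb: "same_base G' G" using r unfolding refines_def by simp
  have pl: "\<And>h. h \<in> nodes G \<Longrightarrow> player G' h = player G h" using sb unfolding same_base_def by simp
  show ?thesis
  apply (rule transfer[where N="nodes G" and Of="obs_i G' i" and Og="obs_i G i"
      and P="\<lambda>h. player G h = Some i" and F="\<lambda>h a. (Some i, infoset_of G' h, a)"
      and Gf="\<lambda>h a. (Some i, infoset_of G h, a)"])
  apply (erule g_prefix[OF assms(1)])
  apply (rule obs_i_Nil)
  subgoal for h a using obs_i_snoc[of G' i h a] pl[OF g_prefix[OF g]] by simp
  apply (rule obs_i_Nil)
  apply (rule obs_i_snoc)
  subgoal for h a h' a'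
    using step2[OF g g' r, of h a h' a' i] by simp
  using assms by simp_all
qed

theorem corollary1:
  fixes G G' :: "('p, 'a) game"
  assumes "is_game G" and "is_game G'"
    and "refines G' G" and "perfect_recall G'"
  shows "refines G' (pr G) \<and> perfect_recall (pr G)"
proof
  note g = assms(1) and g' = assms(2) and r = assms(3) and prc = assms(4)
  have sb: "same_base G' G" using r unfolding refines_def by simp
  have nd: "nodes G' = nodes G" and ps: "players G' = players G" using sb unfolding same_base_def by simp_all
  have sb2: "same_base G' (pr G)" using sb unfolding same_base_def by simp
  have part: "\<exists>S \<subseteq> infosets G' i.
        (\<forall>A \<in> S. \<forall>B \<in> S. A \<noteq> B \<longrightarrow> A \<inter> B = {}) \<and> J = \<Union>S"
    if i: "i \<in> players G" and J: "J \<in> infosets (pr G) i" for i J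
  proof -
    obtain I h0 where I: "I \<in> infosets G i" "h0 \<in> I" "J = {y \<in> I. obs_i G i y = obs_i G i h0}"
      by (rule pr_infosetE[OF J])
    obtain S0 where S0: "S0 \<subseteq> infosets G' i" "\<forall>A \<in> S0. \<forall>B \<in> S0. A \<noteq> B \<longrightarrow> A \<inter> B = {}" "I = \<Union>S0"
      by (rule refinesD[OF r i I(1)])
    define S where "S = {A \<in> S0. A \<inter> J \<noteq> {}}"
    have i': "i \<in> players G'" using i ps by simp
    have In: "I \<subseteq> nodes G" by (rule infoset_nodes[OF g i I(1)])
    have "J = \<Union>S"
    proof
      show "J \<subseteq> \<Union>S"
      proof
        fix y assume y: "y \<in> J"
        then have "y \<in> \<Union>S0" using I(3) S0(3) by simp
        then obtain A where "A \<in> S0" "y \<in> A" by (rule UnionE)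
        then have "A \<in> S" using y unfolding S_def by blast
        then show "y \<in> \<Union>S" using \<open>y \<in> A\<close> by (rule UnionI)
      qed
    next
      show "\<Union>S \<subseteq> J"
      proof
        fix y assume "y \<in> \<Union>S"
        then obtain A where A: "A \<in> S" "y \<in> A" by (rule UnionE)
        then have A0: "A \<in> S0" and "A \<inter> J \<noteq> {}" unfolding S_def by simp_all
        then obtain x where x: "x \<in> A" "x \<in> J" by blast
        have AI: "A \<subseteq> I" using S0(3) Union_upper[OF A0] by simp
        have AG': "A \<in> infosets G' i" by (rule subsetD[OF S0(1) A0])
        have PR: "\<forall>i \<in> players G'. \<forall>I \<in> infosets G' i. \<forall>h \<in> I. \<forall>h' \<in> I. obs_i G' i h = obs_i G' i h'"
          using prc unfolding perfect_recall_def by assumption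
        have "obs_i G' i x = obs_i G' i y"
          using bspec[OF bspec[OF bspec[OF bspec[OF PR i'] AG'] x(1)] A(2)] by assumption
        moreover have xI: "x \<in> I" and yI: "y \<in> I" using AI x(1) A(2) by (auto intro: subsetD)
        moreover have xn: "x \<in> nodes G" and yn: "y \<in> nodes G" using In xI yI by (auto intro: subsetD)
        ultimately have "obs_i G i x = obs_i G i y" by (intro transfer2[OF g g' r xn yn])
        then show "y \<in> J" using x(2) yI I(3) by simp
      qed
    qed
    moreover have "S \<subseteq> infosets G' i" using S0(1) unfolding S_def by blast
    moreover have "\<forall>A \<in> S. \<forall>B \<in> S. A \<noteq> B \<longrightarrow> A \<inter> B = {}" using S0(2) unfolding S_def by blast
    ultimately show ?thesis by (intro exI[where x=S] conjI)
  qed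
  show "refines G' (pr G)" unfolding refines_def
  proof (intro conjI ballI)
    show "same_base G' (pr G)" by (rule sb2)
  next
    fix i J assume i: "i \<in> players (pr G)" and J: "J \<in> infosets (pr G) i"
    have i0: "i \<in> players G" using i by simp
    show "\<exists>S \<subseteq> infosets G' i. (\<forall>A \<in> S. \<forall>B \<in> S. A \<noteq> B \<longrightarrow> A \<inter> B = {}) \<and> J = \<Union>S"
      by (rule part[OF i0 J])
  qed
  show "perfect_recall (pr G)" unfolding perfect_recall_def
  proof (intro ballI)
    fix i J h h' assume i: "i \<in> players (pr G)" and J: "J \<in> infosets (pr G) i" and h: "h \<in> J" "h' \<in> J"
    obtain I h0 where I: "I \<in> infosets G i" "h0 \<in> I" "J = {y \<in> I. obs_i G i y = obs_i G i h0}"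
      by (rule pr_infosetE[OF J])
    have i0: "i \<in> players G" using i by simp
    have In: "I \<subseteq> nodes G" by (rule infoset_nodes[OF g i0 I(1)])
    have hI: "h \<in> I" "h' \<in> I" "obs_i G i h = obs_i G i h'" using h I(3) by simp_all
    have hn: "h \<in> nodes G" and h'n: "h' \<in> nodes G" using In hI by (auto intro: subsetD)
    show "obs_i (pr G) i h = obs_i (pr G) i h'" by (rule transfer1[OF g hn h'n hI(3)])
  qed
qed

end
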